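(* Let $\mathcal{X},\mathcal{Y}$ be stationary finite Markov chains, $C:{\bm X}\times{\bm Y}\to\mathbb{R}_+$ a cost function, and $p$ a probability distribution on $\mathbb{N}$ with $p(t)>0$ for all $t\in\mathbb{N}$. Then $d_{\mathrm{OTC}}(\mathcal{X},\mathcal{Y};C)=0$ if and only if $d^{p}_{\mathrm{OTM}}(\mathcal{X},\mathcal{Y};C)=0$.
   Context: A finite Markov chain $\mathcal{X}=({\bm X},m^{\bm X}_\bullet,\nu^{\bm X})$ consists of a finite set ${\bm X}$, a transition kernel $m^{\bm X}_\bullet:{\bm X}\to\mathcal{P}({\bm X})$ and an initial distribution $\nu^{\bm X}$; it is stationary if $\nu^{\bm X}$ is stationary for $m^{\bm X}_\bullet$. $\mathcal{C}(\alpha,\beta)$ denotes the set of couplings of $\alpha,\beta$. A Markovian coupling between $\mathcal{X}$ and $\mathcal{Y}$ is a (possibly time-inhomogeneous) Markov chain $(X_t,Y_t)_{t\in\mathbb{N}}$ on ${\bm X}\times{\bm Y}$ with $\mathrm{law}(X_0,Y_0)\in\mathcal{C}(\nu^{\bm X},\nu^{\bm Y})$ and, for all $t,x,y$, the conditional law of $(X_{t+1},Y_{t+1})$ given $(X_t,Y_t)=(x,y)$ in $\mathcal{C}(m^{\bm X}_x,m^{\bm Y}_y)$; it is time homogeneous if these conditional laws do not depend on $t$. For $p\in\mathcal{P}(\mathbb{N})$ and $T\sim p$, $d^{p}_{\mathrm{OTM}}(\mathcal{X},\mathcal{Y};C)=\inf\mathbb{E}\,C(X_T,Y_T)$ over all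 Markovian couplings independent of $T$. $d_{\mathrm{OTC}}(\mathcal{X},\mathcal{Y};C)=\inf\mathbb{E}\,C(X_0,Y_0)$ over all time homogeneous Markovian couplings whose initial distribution is stationary for the coupled chain. *)

theory Defs
  imports "HOL-Probability.Probability"
begin

text \<open>A finite Markov chain on a finite type 'a is given by a transition kernel
  m :: 'a \<Rightarrow> 'a pmf and an initial distribution nu :: 'a pmf.\<close>

definition stationary :: "('a \<Rightarrow> 'a pmf) \<Rightarrow> 'a pmf \<Rightarrow> bool" where
  "stationary m nu \<longleftrightarrow> bind_pmf nu m = nu"

definition couplings :: "'a pmf \<Rightarrow> 'b pmf \<Rightarrow> ('a \<times> 'b) pmf set" where
  "couplings \<alpha> \<beta> = {\<gamma>. map_pmf fst \<gamma> = \<alpha> \<and> map_pmf snd \<gamma> = \<beta>}"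

fun chain_law :: "('c pmf) \<Rightarrow> (nat \<Rightarrow> 'c \<Rightarrow> 'c pmf) \<Rightarrow> nat \<Rightarrow> 'c pmf" where
  "chain_law pi0 K 0 = pi0"
| "chain_law pi0 K (Suc t) = bind_pmf (chain_law pi0 K t) (K t)"

definition markovian_coupling ::
  "('x \<Rightarrow> 'x pmf) \<Rightarrow> 'x pmf \<Rightarrow> ('y \<Rightarrow> 'y pmf) \<Rightarrow> 'y pmf
   \<Rightarrow> ('x \<times> 'y) pmf \<Rightarrow> (nat \<Rightarrow> 'x \<times> 'y \<Rightarrow> ('x \<times> 'y) pmf) \<Rightarrow> bool" where
  "markovian_coupling mX nuX mY nuY pi0 K \<longleftrightarrow>
     pi0 \<in> couplings nuX nuY \<and>
     (\<forall>t x y. K t (x, y) \<in> couplings (mX x) (mY y))"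

definition stationary_markovian_coupling ::
  "('x \<Rightarrow> 'x pmf) \<Rightarrow> 'x pmf \<Rightarrow> ('y \<Rightarrow> 'y pmf) \<Rightarrow> 'y pmf
   \<Rightarrow> ('x \<times> 'y) pmf \<Rightarrow> ('x \<times> 'y \<Rightarrow> ('x \<times> 'y) pmf) \<Rightarrow> bool" where
  "stationary_markovian_coupling mX nuX mY nuY pi0 K \<longleftrightarrow>
     markovian_coupling mX nuX mY nuY pi0 (\<lambda>_. K) \<and> stationary K pi0"

text \<open>d^p_OTM: infimum over Markovian couplings (independent of T ~ p) of E C(X_T, Y_T).\<close>
definition d_OTM ::
  "nat pmf \<Rightarrow> ('x \<Rightarrow> 'x pmf) \<Rightarrow> 'x pmf \<Rightarrow> ('y \<Rightarrow> 'y pmf) \<Rightarrow> 'y pmf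
   \<Rightarrow> ('x \<Rightarrow> 'y \<Rightarrow> real) \<Rightarrow> real" where
  "d_OTM p mX nuX mY nuY C =
     (INF (pi0, K) \<in> {(pi0, K). markovian_coupling mX nuX mY nuY pi0 K}.
        measure_pmf.expectation (bind_pmf p (\<lambda>t. chain_law pi0 K t)) (\<lambda>(x, y). C x y))"

definition d_OTC ::
  "('x \<Rightarrow> 'x pmf) \<Rightarrow> 'x pmf \<Rightarrow> ('y \<Rightarrow> 'y pmf) \<Rightarrow> 'y pmf
   \<Rightarrow> ('x \<Rightarrow> 'y \<Rightarrow> real) \<Rightarrow> real" where
  "d_OTC mX nuX mY nuY C =
     (INF (pi0, K) \<in> {(pi0, K). stationary_markovian_coupling mX nuX mY nuY pi0 K}.
        measure_pmf.expectation pi0 (\<lambda>(x, y). C x y))"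

end

theory Submission
  imports Defs
begin

lemma expect_finite:
  fixes M :: "('a::finite) pmf" and f :: "'a \<Rightarrow> real"
  shows "measure_pmf.expectation M f = (\<Sum>z\<in>UNIV. pmf M z * f z)"
  by (subst integral_measure_pmf_real[where A=UNIV]) (auto simp: mult.commute)

lemma pmf_map_fst:
  fixes M :: "('a::finite \<times> 'b::finite) pmf"
  shows "pmf (map_pmf fst M) x = (\<Sum>y\<in>UNIV. pmf M (x,y))"
proof -
  have "fst -` {x} = range (Pair x)" by auto
  then have "pmf (map_pmf fst M) x = sum (pmf M) (range (Pair x))"
    unfolding pmf_map by (metis finite measure_measure_pmf_finite)
  also have "\<dots> = (\<Sum>y\<in>UNIV. pmf M (x,y))"
    by (subst sum.reindex) (auto simp: inj_on_def)
  finally show ?thesis .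
qed

lemma pmf_map_snd:
  fixes M :: "('a::finite \<times> 'b::finite) pmf"
  shows "pmf (map_pmf snd M) y = (\<Sum>x\<in>UNIV. pmf M (x,y))"
proof -
  have "snd -` {y} = range (\<lambda>x. (x,y))" by auto
  then have "pmf (map_pmf snd M) y = sum (pmf M) (range (\<lambda>x. (x,y)))"
    unfolding pmf_map by (metis finite measure_measure_pmf_finite)
  also have "\<dots> = (\<Sum>x\<in>UNIV. pmf M (x,y))"
    by (subst sum.reindex) (auto simp: inj_on_def)
  finally show ?thesis .
qed

lemma pmf_bind_finite:
  fixes M :: "('a::finite) pmf"
  shows "pmf (bind_pmf M f) z = (\<Sum>w\<in>UNIV. pmf M w * pmf (f w) z)"
  by (simp add: pmf_bind expect_finite)

lemma sum_prod_UNIV: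
  fixes f :: "('a::finite \<times> 'b::finite) \<Rightarrow> real"
  shows "(\<Sum>z\<in>UNIV. f z) = (\<Sum>x\<in>UNIV. \<Sum>y\<in>UNIV. f (x,y))"
  by (simp add: sum.cartesian_product UNIV_Times_UNIV[symmetric] del: UNIV_Times_UNIV)

lemma indep_stationary:
  fixes nuX :: "('x::finite) pmf" and nuY :: "('y::finite) pmf"
    and mX :: "'x \<Rightarrow> 'x pmf" and mY :: "'y \<Rightarrow> 'y pmf"
  shows "bind_pmf (pair_pmf nuX nuY) (\<lambda>z. pair_pmf (mX (fst z)) (mY (snd z)))
         = pair_pmf (bind_pmf nuX mX) (bind_pmf nuY mY)"
proof (rule pmf_eqI)
  fix i :: "'x \<times> 'y"
  obtain a b where i: "i = (a,b)" by (cases i)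
  show "pmf (bind_pmf (pair_pmf nuX nuY) (\<lambda>z. pair_pmf (mX (fst z)) (mY (snd z)))) i =
        pmf (pair_pmf (bind_pmf nuX mX) (bind_pmf nuY mY)) i"
    unfolding i pmf_bind_finite pmf_pair
    by (subst sum_prod_UNIV) (simp add: pmf_pair sum_product algebra_simps)
qed

lemma chain_fst:
  assumes "stationary mX nuX" "markovian_coupling mX nuX mY nuY pi0 K"
  shows "map_pmf fst (chain_law pi0 K t) = nuX"
proof (induction t)
  case 0 then show ?case using assms by (simp add: markovian_coupling_def couplings_def)
next
  case (Suc t)
  have "map_pmf fst (chain_law pi0 K (Suc t)) = bind_pmf (chain_law pi0 K t) (\<lambda>z. mX (fst z))"
    using assms(2) by (auto simp: map_bind_pmf markovian_coupling_def couplings_def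
        intro!: bind_pmf_cong)
  also have "\<dots> = bind_pmf (map_pmf fst (chain_law pi0 K t)) mX" by (simp add: bind_map_pmf)
  finally show ?case using Suc assms(1) by (simp add: stationary_def)
qed

lemma chain_snd:
  assumes "stationary mY nuY" "markovian_coupling mX nuX mY nuY pi0 K"
  shows "map_pmf snd (chain_law pi0 K t) = nuY"
proof (induction t)
  case 0 then show ?case using assms by (simp add: markovian_coupling_def couplings_def)
next
  case (Suc t)
  have "map_pmf snd (chain_law pi0 K (Suc t)) = bind_pmf (chain_law pi0 K t) (\<lambda>z. mY (snd z))"
    using assms(2) by (auto simp: map_bind_pmf markovian_coupling_def couplings_def
        intro!: bind_pmf_cong)
  also have "\<dots> = bind_pmf (map_pmf snd (chain_law pi0 K t)) mY" by (simp add: bind_map_pmf)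
  finally show ?case using Suc assms(1) by (simp add: stationary_def)
qed

lemma integral_lower:
  fixes h :: "nat \<Rightarrow> real"
  assumes "\<And>t. 0 \<le> h t" "\<And>t. h t \<le> B"
  shows "pmf p t0 * h t0 \<le> measure_pmf.expectation p h"
proof -
  have int: "integrable (measure_pmf p) h"
    by (rule measure_pmf.integrable_const_bound[where B=B]) (use assms in auto)
  have int2: "integrable (measure_pmf p) (\<lambda>t. indicator {t0} t * h t0)"
    by (rule measure_pmf.integrable_const_bound[where B="\<bar>h t0\<bar>"]) (auto simp: indicator_def)
  have e: "measure_pmf.expectation p (\<lambda>t. indicator {t0} t * h t0) = pmf p t0 * h t0"
    by (subst integral_measure_pmf_real[where A="{t0}"]) (auto simp: indicator_def split: if_splits)
  have "measure_pmf.expectation p (\<lambda>t. indicator {t0} t * h t0) \<le> measure_pmf.expectation p h"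
    by (rule integral_mono[OF int2 int]) (use assms in \<open>auto simp: indicator_def\<close>)
  then show ?thesis using e by linarith
qed

lemma embed_finite:
  fixes f :: "'a::finite \<Rightarrow> real"
  assumes "\<And>z. 0 \<le> f z" "(\<Sum>z\<in>UNIV. f z) = 1"
  shows "pmf (embed_pmf f) z = f z"
  by (rule pmf_embed_pmf) (use assms in \<open>auto simp: nn_integral_count_space_finite\<close>)

lemma construct:
  fixes G :: "('x::finite \<times> 'y::finite) \<Rightarrow> ('x \<times> 'y) \<Rightarrow> real"
    and mX :: "'x \<Rightarrow> 'x pmf" and mY :: "'y \<Rightarrow> 'y pmf"
  assumes nn: "\<And>z z'. 0 \<le> G z z'"
    and c2: "\<And>x y x'. (\<Sum>y'\<in>UNIV. G (x,y) (x',y')) = (\<Sum>z'\<in>UNIV. G (x,y) z') * pmf (mX x) x'"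
    and c3: "\<And>x y y'. (\<Sum>x'\<in>UNIV. G (x,y) (x',y')) = (\<Sum>z'\<in>UNIV. G (x,y) z') * pmf (mY y) y'"
    and c4: "\<And>x. (\<Sum>y\<in>UNIV. (\<Sum>z'\<in>UNIV. G (x,y) z')) = pmf nuX x"
    and c5: "\<And>y. (\<Sum>x\<in>UNIV. (\<Sum>z'\<in>UNIV. G (x,y) z')) = pmf nuY y"
    and c6: "\<And>z'. (\<Sum>z\<in>UNIV. G z z') = (\<Sum>w\<in>UNIV. G z' w)"
  shows "\<exists>pi0 K. stationary_markovian_coupling mX nuX mY nuY pi0 K \<and>
           (\<forall>z. pmf pi0 z = (\<Sum>z'\<in>UNIV. G z z'))"
proof -
  define a where "a z = (\<Sum>z'\<in>UNIV. G z z')" for z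
  have a_nn: "0 \<le> a z" for z unfolding a_def by (simp add: nn sum_nonneg)
  have "(\<Sum>z\<in>UNIV. a z) = (\<Sum>x\<in>UNIV. \<Sum>y\<in>UNIV. a (x,y))" by (rule sum_prod_UNIV)
  also have "\<dots> = (\<Sum>x\<in>UNIV. pmf nuX x)" using c4 by (simp add: a_def)
  also have "\<dots> = 1" by (simp add: sum_pmf_eq_1)
  finally have sum_a: "(\<Sum>z\<in>UNIV. a z) = 1" .
  define pi0 where "pi0 = embed_pmf a"
  have pmf_pi0: "pmf pi0 z = a z" for z
    unfolding pi0_def by (rule embed_finite[OF a_nn sum_a])
  define K where "K z = (if 0 < a z then embed_pmf (\<lambda>z'. G z z' / a z)
      else pair_pmf (mX (fst z)) (mY (snd z)))" for z
  have pmf_K: "pmf (K z) z' = G z z' / a z" if "0 < a z" for z z'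
  proof -
    have "(\<Sum>z'\<in>UNIV. G z z' / a z) = 1"
      using that by (simp add: sum_divide_distrib[symmetric] a_def)
    then show ?thesis
      unfolding K_def using that by (simp add: embed_finite nn)
  qed
  have K_coup: "K z \<in> couplings (mX x) (mY y)" if z: "z = (x,y)" for z x y
  proof (cases "0 < a z")
    case True
    then have True: "0 < a (x,y)" using z by simp
    have "map_pmf fst (K z) = mX x"
    proof (rule pmf_eqI)
      fix x'
      show "pmf (map_pmf fst (K z)) x' = pmf (mX x) x'"
        using True c2[of x y x'] unfolding z pmf_map_fst pmf_K[OF True]
        by (simp add: sum_divide_distrib[symmetric] a_def)
    qed
    moreover have "map_pmf snd (K z) = mY y"
    proof (rule pmf_eqI)
      fix y'
      show "pmf (map_pmf snd (K z)) y' = pmf (mY y) y'"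
        using True c3[of x y y'] unfolding z pmf_map_snd pmf_K[OF True]
        by (simp add: sum_divide_distrib[symmetric] a_def)
    qed
    ultimately show ?thesis by (simp add: couplings_def)
  next
    case False
    then show ?thesis using z
      by (simp add: K_def couplings_def map_fst_pair_pmf map_snd_pair_pmf)
  qed
  have pi0_coup: "pi0 \<in> couplings nuX nuY"
  proof -
    have "map_pmf fst pi0 = nuX"
      by (rule pmf_eqI) (simp add: pmf_map_fst pmf_pi0 a_def c4)
    moreover have "map_pmf snd pi0 = nuY"
      by (rule pmf_eqI) (simp add: pmf_map_snd pmf_pi0 a_def c5)
    ultimately show ?thesis by (simp add: couplings_def)
  qed
  have stat: "stationary K pi0"
    unfolding stationary_def
  proof (rule pmf_eqI)
    fix z'
    have "pmf pi0 w * pmf (K w) z' = G w z'" for w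
    proof (cases "0 < a w")
      case True then show ?thesis by (simp add: pmf_pi0 pmf_K)
    next
      case False
      then have "a w = 0" using a_nn[of w] by simp
      then have "G w z' = 0"
        using sum_nonneg_eq_0_iff[of UNIV "G w"] nn unfolding a_def by (metis UNIV_I finite)
      then show ?thesis using \<open>a w = 0\<close> by (simp add: pmf_pi0)
    qed
    then show "pmf (bind_pmf pi0 K) z' = pmf pi0 z'"
      by (simp add: pmf_bind_finite pmf_pi0 c6 a_def)
  qed
  have "stationary_markovian_coupling mX nuX mY nuY pi0 K"
    unfolding stationary_markovian_coupling_def markovian_coupling_def
    using pi0_coup K_coup stat by auto
  then show ?thesis using pmf_pi0 unfolding a_def by blast
qed

lemma subseq_finite:
  fixes w :: "nat \<Rightarrow> 'i \<Rightarrow> real"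
  assumes "finite S" "\<And>n i. \<bar>w n i\<bar> \<le> B"
  shows "\<exists>r. strict_mono r \<and> (\<forall>i\<in>S. convergent (\<lambda>n. w (r n) i))"
  using assms(1)
proof (induction S rule: finite_induct)
  case empty
  show ?case by (rule exI[of _ id]) (simp add: strict_mono_id)
next
  case (insert a S)
  then obtain r where r: "strict_mono r" "\<forall>i\<in>S. convergent (\<lambda>n. w (r n) i)" by blast
  have "bounded (range (\<lambda>n. w (r n) a))"
    by (rule boundedI[where B=B]) (use assms(2) in auto)
  then obtain l s where s: "strict_mono s" "((\<lambda>n. w (r n) a) \<circ> s) \<longlonglongrightarrow> l"
    using bounded_imp_convergent_subsequence by blast
  have "strict_mono (r \<circ> s)" using r(1) s(1) by (rule strict_mono_o)
  moreover have "\<forall>i\<in>insert a S. convergent (\<lambda>n. w ((r \<circ> s) n) i)"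
  proof
    fix i assume "i \<in> insert a S"
    then show "convergent (\<lambda>n. w ((r \<circ> s) n) i)"
    proof
      assume "i = a" then show ?thesis using s(2) by (auto simp: convergent_def o_def)
    next
      assume "i \<in> S"
      then have "convergent ((\<lambda>n. w (r n) i) \<circ> s)"
        using r(2) s(1) convergent_subseq_convergent by blast
      then show ?thesis by (simp add: o_def)
    qed
  qed
  ultimately show ?case by blast
qed

lemma limit_zero:
  fixes s b :: "nat \<Rightarrow> real"
  assumes "s \<longlonglongrightarrow> l" "b \<longlonglongrightarrow> 0" "\<And>n. \<bar>s n\<bar> \<le> b n"
  shows "l = 0"
proof -
  have "(\<lambda>n. \<bar>s n\<bar>) \<longlonglongrightarrow> \<bar>l\<bar>" using assms(1) by (rule tendsto_rabs)
  then have "\<bar>l\<bar> \<le> 0" using assms(2,3) by (intro LIMSEQ_le) auto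
  then show ?thesis by simp
qed

lemma limit_eq:
  fixes s u :: "nat \<Rightarrow> real"
  assumes "s \<longlonglongrightarrow> l" "u \<longlonglongrightarrow> m" "\<And>n. s n = u n"
  shows "l = m"
  using assms by (metis LIMSEQ_unique ext)

lemma key:
  fixes mX :: "'x::finite \<Rightarrow> 'x pmf" and nuX :: "'x pmf"
    and mY :: "'y::finite \<Rightarrow> 'y pmf" and nuY :: "'y pmf"
    and C :: "'x \<Rightarrow> 'y \<Rightarrow> real" and p :: "nat pmf"
  assumes sX: "stationary mX nuX" and sY: "stationary mY nuY"
    and Cnn: "\<And>x y. C x y \<ge> 0"
    and ppos: "\<And>t. pmf p t > 0"
    and small: "\<And>n. \<exists>pi0 K. markovian_coupling mX nuX mY nuY pi0 K \<and>
       measure_pmf.expectation (bind_pmf p (\<lambda>t. chain_law pi0 K t)) (\<lambda>(x, y). C x y)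
         < Min (pmf p ` {..n}) / real (Suc n)"
  shows "\<exists>pi0 K. stationary_markovian_coupling mX nuX mY nuY pi0 K \<and>
           measure_pmf.expectation pi0 (\<lambda>(x, y). C x y) = 0"
proof -
  define Cc where "Cc = (\<lambda>(x, y). C x y)"
  have Cc_nn: "0 \<le> Cc z" for z unfolding Cc_def using Cnn by (auto split: prod.splits)
  obtain P KK where PK: "\<And>n. markovian_coupling mX nuX mY nuY (P n) (KK n)"
    "\<And>n. measure_pmf.expectation (bind_pmf p (\<lambda>t. chain_law (P n) (KK n) t)) Cc
         < Min (pmf p ` {..n}) / real (Suc n)"
    using small unfolding Cc_def by metis
  define L where "L n t = chain_law (P n) (KK n) t" for n t
  have Kc: "KK n t (x,y) \<in> couplings (mX x) (mY y)" for n t x y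
    using PK(1)[of n] by (simp add: markovian_coupling_def)
  have Lfst: "map_pmf fst (L n t) = nuX" for n t
    unfolding L_def using chain_fst[OF sX PK(1)] .
  have Lsnd: "map_pmf snd (L n t) = nuY" for n t
    unfolding L_def using chain_snd[OF sY PK(1)] .
  have EL: "measure_pmf.expectation (L n t) Cc \<le> 1 / real (Suc n)" if "t \<le> n" for n t
  proof -
    have lb: "pmf p t * pmf (L n t) z \<le> pmf (bind_pmf p (L n)) z" for z
      unfolding pmf_bind by (rule integral_lower[where B=1]) (auto simp: pmf_le_1)
    have "pmf p t * measure_pmf.expectation (L n t) Cc
          = (\<Sum>z\<in>UNIV. (pmf p t * pmf (L n t) z) * Cc z)"
      by (simp add: expect_finite sum_distrib_left mult.assoc)
    also have "\<dots> \<le> (\<Sum>z\<in>UNIV. pmf (bind_pmf p (L n)) z * Cc z)"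
      by (intro sum_mono mult_right_mono lb Cc_nn)
    also have "\<dots> = measure_pmf.expectation (bind_pmf p (L n)) Cc"
      by (simp add: expect_finite)
    also have "\<dots> < Min (pmf p ` {..n}) / real (Suc n)"
      using PK(2)[of n] by (simp add: L_def[abs_def])
    also have "\<dots> \<le> pmf p t / real (Suc n)"
      using that by (intro divide_right_mono Min_le) auto
    finally have "pmf p t * measure_pmf.expectation (L n t) Cc < pmf p t * (1 / real (Suc n))"
      by simp
    then have "measure_pmf.expectation (L n t) Cc < 1 / real (Suc n)"
      using ppos[of t] mult_less_cancel_left_pos by blast
    then show ?thesis by (rule less_imp_le)
  qed
  have EL_nn: "0 \<le> measure_pmf.expectation (L n t) Cc" for n t
    by (simp add: Cc_nn integral_nonneg_AE)
  define G where "G n z z' = (\<Sum>t<Suc n. pmf (L n t) z * pmf (KK n t z) z') / real (Suc n)"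
    for n z z'
  define A where "A n z = (\<Sum>t<Suc n. pmf (L n t) z) / real (Suc n)" for n z
  have A_eq: "(\<Sum>z'\<in>UNIV. G n z z') = A n z" for n z
  proof -
    have "(\<Sum>z'\<in>UNIV. G n z z') = (\<Sum>t<Suc n. pmf (L n t) z * (\<Sum>z'\<in>UNIV. pmf (KK n t z) z')) / real (Suc n)"
      unfolding G_def by (simp add: sum_divide_distrib[symmetric] sum_distrib_left sum.swap[of _ UNIV])
    also have "\<dots> = A n z" by (simp add: sum_pmf_eq_1 A_def)
    finally show ?thesis .
  qed
  have G_nn: "0 \<le> G n z z'" for n z z' unfolding G_def by (simp add: sum_nonneg)
  have G_le: "\<bar>G n z z'\<bar> \<le> 1" for n z z'
  proof -
    have "(\<Sum>t<Suc n. pmf (L n t) z * pmf (KK n t z) z') \<le> (\<Sum>t<Suc n. 1)"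
      by (intro sum_mono mult_le_one) (auto simp: pmf_le_1)
    then show ?thesis using G_nn[of n z z'] unfolding G_def
      by (simp del: sum.lessThan_Suc add: abs_of_nonneg sum_nonneg divide_le_eq_1_pos)
  qed
  have g2: "(\<Sum>y'\<in>UNIV. G n (x,y) (x',y')) = A n (x,y) * pmf (mX x) x'" for n x y x'
  proof -
    have "(\<Sum>y'\<in>UNIV. pmf (KK n t (x,y)) (x',y')) = pmf (mX x) x'" for t
      using Kc[of n t x y] by (simp add: pmf_map_fst[symmetric] couplings_def)
    note h = this
    have "(\<Sum>y'\<in>UNIV. G n (x,y) (x',y')) = (\<Sum>y'\<in>UNIV. \<Sum>t<Suc n. pmf (L n t) (x,y) * pmf (KK n t (x,y)) (x',y')) / real (Suc n)"
      unfolding G_def by (simp only: sum_divide_distrib)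
    also have "\<dots> = (\<Sum>t<Suc n. \<Sum>y'\<in>UNIV. pmf (L n t) (x,y) * pmf (KK n t (x,y)) (x',y')) / real (Suc n)"
      by (subst sum.swap) (rule refl)
    also have "\<dots> = (\<Sum>t<Suc n. pmf (L n t) (x,y) * pmf (mX x) x') / real (Suc n)"
      by (simp only: sum_distrib_left[symmetric] h)
    also have "\<dots> = A n (x,y) * pmf (mX x) x'"
      unfolding A_def by (simp only: sum_distrib_right[symmetric] times_divide_eq_left)
    finally show ?thesis .
  qed
  have g3: "(\<Sum>x'\<in>UNIV. G n (x,y) (x',y')) = A n (x,y) * pmf (mY y) y'" for n x y y'
  proof -
    have "(\<Sum>x'\<in>UNIV. pmf (KK n t (x,y)) (x',y')) = pmf (mY y) y'" for t
      using Kc[of n t x y] by (simp add: pmf_map_snd[symmetric] couplings_def)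
    note h = this
    have "(\<Sum>x'\<in>UNIV. G n (x,y) (x',y')) = (\<Sum>x'\<in>UNIV. \<Sum>t<Suc n. pmf (L n t) (x,y) * pmf (KK n t (x,y)) (x',y')) / real (Suc n)"
      unfolding G_def by (simp only: sum_divide_distrib)
    also have "\<dots> = (\<Sum>t<Suc n. \<Sum>x'\<in>UNIV. pmf (L n t) (x,y) * pmf (KK n t (x,y)) (x',y')) / real (Suc n)"
      by (subst sum.swap) (rule refl)
    also have "\<dots> = (\<Sum>t<Suc n. pmf (L n t) (x,y) * pmf (mY y) y') / real (Suc n)"
      by (simp only: sum_distrib_left[symmetric] h)
    also have "\<dots> = A n (x,y) * pmf (mY y) y'"
      unfolding A_def by (simp only: sum_distrib_right[symmetric] times_divide_eq_left)
    finally show ?thesis .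
  qed
  have g4: "(\<Sum>y\<in>UNIV. A n (x,y)) = pmf nuX x" for n x
  proof -
    have "(\<Sum>y\<in>UNIV. pmf (L n t) (x,y)) = pmf nuX x" for t
      using Lfst[of n t] by (simp add: pmf_map_fst[symmetric])
    note h = this
    have "(\<Sum>y\<in>UNIV. A n (x,y)) = (\<Sum>y\<in>UNIV. \<Sum>t<Suc n. pmf (L n t) (x,y)) / real (Suc n)"
      unfolding A_def by (simp only: sum_divide_distrib)
    also have "\<dots> = (\<Sum>t<Suc n. \<Sum>y\<in>UNIV. pmf (L n t) (x,y)) / real (Suc n)"
      by (subst sum.swap) (rule refl)
    also have "\<dots> = pmf nuX x"
      by (simp only: h) simp
    finally show ?thesis .
  qed
  have g5: "(\<Sum>x\<in>UNIV. A n (x,y)) = pmf nuY y" for n y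
  proof -
    have "(\<Sum>x\<in>UNIV. pmf (L n t) (x,y)) = pmf nuY y" for t
      using Lsnd[of n t] by (simp add: pmf_map_snd[symmetric])
    note h = this
    have "(\<Sum>x\<in>UNIV. A n (x,y)) = (\<Sum>x\<in>UNIV. \<Sum>t<Suc n. pmf (L n t) (x,y)) / real (Suc n)"
      unfolding A_def by (simp only: sum_divide_distrib)
    also have "\<dots> = (\<Sum>t<Suc n. \<Sum>x\<in>UNIV. pmf (L n t) (x,y)) / real (Suc n)"
      by (subst sum.swap) (rule refl)
    also have "\<dots> = pmf nuY y"
      by (simp only: h) simp
    finally show ?thesis .
  qed
  have g6: "\<bar>(\<Sum>z\<in>UNIV. G n z z') - A n z'\<bar> \<le> 1 / real (Suc n)" for n z'
  proof -
    have step: "(\<Sum>z\<in>UNIV. pmf (L n t) z * pmf (KK n t z) z') = pmf (L n (Suc t)) z'" for t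
      by (simp add: L_def pmf_bind_finite)
    have "(\<Sum>z\<in>UNIV. G n z z') - A n z'
        = (\<Sum>t<Suc n. pmf (L n (Suc t)) z' - pmf (L n t) z') / real (Suc n)"
    proof -
      have "(\<Sum>z\<in>UNIV. G n z z') = (\<Sum>z\<in>UNIV. \<Sum>t<Suc n. pmf (L n t) z * pmf (KK n t z) z') / real (Suc n)"
        unfolding G_def by (simp only: sum_divide_distrib)
      also have "\<dots> = (\<Sum>t<Suc n. \<Sum>z\<in>UNIV. pmf (L n t) z * pmf (KK n t z) z') / real (Suc n)"
        by (subst sum.swap) (rule refl)
      also have "\<dots> = (\<Sum>t<Suc n. pmf (L n (Suc t)) z') / real (Suc n)"
        by (simp only: step)
      finally show ?thesis unfolding A_def
        by (simp only: sum_subtractf diff_divide_distrib)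
    qed
    also have "\<dots> = (pmf (L n (Suc n)) z' - pmf (L n 0) z') / real (Suc n)"
      by (subst sum_lessThan_telescope) simp
    finally have e: "(\<Sum>z\<in>UNIV. G n z z') - A n z' = (pmf (L n (Suc n)) z' - pmf (L n 0) z') / real (Suc n)" .
    have "\<bar>pmf (L n (Suc n)) z' - pmf (L n 0) z'\<bar> \<le> 1"
      using pmf_le_1[of "L n (Suc n)" z'] pmf_le_1[of "L n 0" z'] pmf_nonneg[of "L n (Suc n)" z'] pmf_nonneg[of "L n 0" z']
      by linarith
    then show ?thesis unfolding e by (simp add: divide_right_mono)
  qed
  have g7: "(\<Sum>z\<in>UNIV. A n z * Cc z) \<le> 1 / real (Suc n)" for n
  proof -
    have "(\<Sum>z\<in>UNIV. A n z * Cc z) = (\<Sum>t<Suc n. measure_pmf.expectation (L n t) Cc) / real (Suc n)"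
    proof -
      have "(\<Sum>z\<in>UNIV. A n z * Cc z) = (\<Sum>z\<in>UNIV. \<Sum>t<Suc n. pmf (L n t) z * Cc z) / real (Suc n)"
        unfolding A_def by (simp only: times_divide_eq_left sum_distrib_right sum_divide_distrib)
      also have "\<dots> = (\<Sum>t<Suc n. \<Sum>z\<in>UNIV. pmf (L n t) z * Cc z) / real (Suc n)"
        by (subst sum.swap) (rule refl)
      finally show ?thesis by (simp only: expect_finite)
    qed
    also have "\<dots> \<le> (\<Sum>t<Suc n. 1 / real (Suc n)) / real (Suc n)"
      by (intro divide_right_mono sum_mono EL) auto
    also have "\<dots> = 1 / real (Suc n)" by simp
    finally show ?thesis .
  qed
  have A_nn: "0 \<le> A n z" for n z unfolding A_def by (simp add: sum_nonneg)
  obtain r where r: "strict_mono r"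
    "\<forall>i\<in>UNIV. convergent (\<lambda>n. (\<lambda>n (z, z'). G n z z') (r n) i)"
    using subseq_finite[where w="\<lambda>n (z,z'). G n z z'" and S=UNIV and B=1] G_le
    by (auto split: prod.splits)
  define Gl where "Gl z z' = lim (\<lambda>n. G (r n) z z')" for z z'
  have GL: "(\<lambda>n. G (r n) z z') \<longlonglongrightarrow> Gl z z'" for z z'
  proof -
    have "convergent (\<lambda>n. G (r n) z z')" using r(2)[rule_format, of "(z,z')"] by simp
    then show ?thesis by (simp add: Gl_def convergent_LIMSEQ_iff)
  qed
  define Al where "Al z = (\<Sum>z'\<in>UNIV. Gl z z')" for z
  have AL: "(\<lambda>n. A (r n) z) \<longlonglongrightarrow> Al z" for z
    unfolding Al_def A_eq[symmetric] by (intro tendsto_sum GL)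
  have inv0: "(\<lambda>n. 1 / real (Suc (r n))) \<longlonglongrightarrow> 0"
  proof -
    have "(\<lambda>n. 1 / real (Suc n)) \<longlonglongrightarrow> 0"
      using LIMSEQ_inverse_real_of_nat by (simp add: inverse_eq_divide)
    from LIMSEQ_subseq_LIMSEQ[OF this r(1)] show ?thesis by (simp add: o_def)
  qed
  have l_nn: "0 \<le> Gl z z'" for z z'
    by (rule LIMSEQ_le_const[OF GL]) (use G_nn in auto)
  have l2: "(\<Sum>y'\<in>UNIV. Gl (x,y) (x',y')) = (\<Sum>z'\<in>UNIV. Gl (x,y) z') * pmf (mX x) x'" for x y x'
  proof -
    have a: "(\<lambda>n. \<Sum>y'\<in>UNIV. G (r n) (x,y) (x',y')) \<longlonglongrightarrow> (\<Sum>y'\<in>UNIV. Gl (x,y) (x',y'))"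
      by (intro tendsto_sum GL)
    have b: "(\<lambda>n. A (r n) (x,y) * pmf (mX x) x') \<longlonglongrightarrow> Al (x,y) * pmf (mX x) x'"
      by (intro tendsto_mult_right AL)
    show ?thesis using limit_eq[OF a b] g2 Al_def by simp
  qed
  have l3: "(\<Sum>x'\<in>UNIV. Gl (x,y) (x',y')) = (\<Sum>z'\<in>UNIV. Gl (x,y) z') * pmf (mY y) y'" for x y y'
  proof -
    have a: "(\<lambda>n. \<Sum>x'\<in>UNIV. G (r n) (x,y) (x',y')) \<longlonglongrightarrow> (\<Sum>x'\<in>UNIV. Gl (x,y) (x',y'))"
      by (intro tendsto_sum GL)
    have b: "(\<lambda>n. A (r n) (x,y) * pmf (mY y) y') \<longlonglongrightarrow> Al (x,y) * pmf (mY y) y'"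
      by (intro tendsto_mult_right AL)
    show ?thesis using limit_eq[OF a b] g3 Al_def by simp
  qed
  have l4: "(\<Sum>y\<in>UNIV. (\<Sum>z'\<in>UNIV. Gl (x,y) z')) = pmf nuX x" for x
  proof -
    have a: "(\<lambda>n. \<Sum>y\<in>UNIV. A (r n) (x,y)) \<longlonglongrightarrow> (\<Sum>y\<in>UNIV. Al (x,y))"
      by (intro tendsto_sum AL)
    show ?thesis using limit_eq[OF a tendsto_const] g4 Al_def by simp
  qed
  have l5: "(\<Sum>x\<in>UNIV. (\<Sum>z'\<in>UNIV. Gl (x,y) z')) = pmf nuY y" for y
  proof -
    have a: "(\<lambda>n. \<Sum>x\<in>UNIV. A (r n) (x,y)) \<longlonglongrightarrow> (\<Sum>x\<in>UNIV. Al (x,y))"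
      by (intro tendsto_sum AL)
    show ?thesis using limit_eq[OF a tendsto_const] g5 Al_def by simp
  qed
  have l6: "(\<Sum>z\<in>UNIV. Gl z z') = (\<Sum>w\<in>UNIV. Gl z' w)" for z'
  proof -
    have a: "(\<lambda>n. (\<Sum>z\<in>UNIV. G (r n) z z') - A (r n) z') \<longlonglongrightarrow> (\<Sum>z\<in>UNIV. Gl z z') - Al z'"
      by (intro tendsto_diff tendsto_sum GL AL)
    have "(\<Sum>z\<in>UNIV. Gl z z') - Al z' = 0"
      by (rule limit_zero[OF a inv0 g6])
    then show ?thesis by (simp add: Al_def)
  qed
  have l7: "(\<Sum>z\<in>UNIV. Al z * Cc z) = 0"
  proof -
    have lim: "(\<lambda>n. \<Sum>z\<in>UNIV. A (r n) z * Cc z) \<longlonglongrightarrow> (\<Sum>z\<in>UNIV. Al z * Cc z)"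
      by (intro tendsto_sum tendsto_mult_right AL)
    have "(\<Sum>z\<in>UNIV. Al z * Cc z) \<le> 0"
      by (rule LIMSEQ_le[OF lim inv0]) (use g7 in auto)
    moreover have "0 \<le> Al z" for z
      unfolding Al_def by (simp add: l_nn sum_nonneg)
    then have "0 \<le> (\<Sum>z\<in>UNIV. Al z * Cc z)" by (simp add: Cc_nn sum_nonneg)
    ultimately show ?thesis by simp
  qed
  obtain pi0 K where pk: "stationary_markovian_coupling mX nuX mY nuY pi0 K"
    "\<forall>z. pmf pi0 z = (\<Sum>z'\<in>UNIV. Gl z z')"
    using construct[of Gl mX mY nuX nuY, OF l_nn l2 l3 l4 l5 l6] by blast
  have "measure_pmf.expectation pi0 Cc = 0"
  proof -
    have l7': "(\<Sum>z\<in>UNIV. (\<Sum>z'\<in>UNIV. Gl z z') * Cc z) = 0" using l7 unfolding Al_def .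
    show ?thesis unfolding expect_finite pk(2)[rule_format] by (rule l7')
  qed
  then show ?thesis using pk(1) unfolding Cc_def by blast
qed


theorem proposition8:
  fixes mX :: "'x::finite \<Rightarrow> 'x pmf" and nuX :: "'x pmf"
    and mY :: "'y::finite \<Rightarrow> 'y pmf" and nuY :: "'y pmf"
    and C :: "'x \<Rightarrow> 'y \<Rightarrow> real" and p :: "nat pmf"
  assumes "stationary mX nuX" and "stationary mY nuY"
    and "\<And>x y. C x y \<ge> 0"
    and "\<And>t. pmf p t > 0"
  shows "d_OTC mX nuX mY nuY C = 0 \<longleftrightarrow> d_OTM p mX nuX mY nuY C = 0"
proof -
  note sX = assms(1) and sY = assms(2) and Cnn = assms(3) and ppos = assms(4)
  define Cc where "Cc = (\<lambda>(x, y). C x y)"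
  have Cc_nn: "0 \<le> Cc z" for z unfolding Cc_def using Cnn by (auto split: prod.splits)
  define S1 where "S1 = {(pi0, K). stationary_markovian_coupling mX nuX mY nuY pi0 K}"
  define S2 where "S2 = {(pi0, K). markovian_coupling mX nuX mY nuY pi0 K}"
  define f1 where "f1 = (\<lambda>(pi0::('x\<times>'y) pmf, K::'x\<times>'y \<Rightarrow> ('x\<times>'y) pmf).
      measure_pmf.expectation pi0 Cc)"
  define f2 where "f2 = (\<lambda>(pi0::('x\<times>'y) pmf, K::nat \<Rightarrow> 'x\<times>'y \<Rightarrow> ('x\<times>'y) pmf).
      measure_pmf.expectation (bind_pmf p (\<lambda>t. chain_law pi0 K t)) Cc)"
  have OTC: "d_OTC mX nuX mY nuY C = Inf (f1 ` S1)"
    unfolding d_OTC_def S1_def f1_def Cc_def by simp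
  have OTM: "d_OTM p mX nuX mY nuY C = Inf (f2 ` S2)"
    unfolding d_OTM_def S2_def f2_def Cc_def by simp
  define I0 where "I0 = pair_pmf nuX nuY"
  define IK where "IK = (\<lambda>z. pair_pmf (mX (fst z)) (mY (snd z)))"
  have I_st: "stationary_markovian_coupling mX nuX mY nuY I0 IK"
    unfolding stationary_markovian_coupling_def markovian_coupling_def stationary_def
      couplings_def I0_def IK_def
    using sX sY indep_stationary[of nuX nuY mX mY]
    by (simp add: map_fst_pair_pmf map_snd_pair_pmf stationary_def)
  have S1ne: "S1 \<noteq> {}" using I_st unfolding S1_def by blast
  have f1nn: "0 \<le> f1 q" for q
    unfolding f1_def by (auto split: prod.splits intro!: integral_nonneg_AE simp: Cc_nn)
  have f2nn: "0 \<le> f2 q" for q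
    unfolding f2_def by (auto split: prod.splits intro!: integral_nonneg_AE simp: Cc_nn)
  have bdd1: "bdd_below (f1 ` S1)" by (rule bdd_belowI[where m=0]) (use f1nn in auto)
  have bdd2: "bdd_below (f2 ` S2)" by (rule bdd_belowI[where m=0]) (use f2nn in auto)
  have trans: "(pi0, \<lambda>_. K) \<in> S2 \<and> f2 (pi0, \<lambda>_. K) = f1 (pi0, K)" if "(pi0, K) \<in> S1" for pi0 K
  proof -
    have st: "stationary_markovian_coupling mX nuX mY nuY pi0 K" using that by (simp add: S1_def)
    have "chain_law pi0 (\<lambda>_. K) t = pi0" for t
      using st by (induction t) (simp_all add: stationary_markovian_coupling_def stationary_def)
    then have "chain_law pi0 (\<lambda>_. K) = (\<lambda>t. pi0)" by (rule ext)
    then show ?thesis using st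
      by (simp add: S2_def f1_def f2_def stationary_markovian_coupling_def)
  qed
  have S2ne: "S2 \<noteq> {}" using trans[of I0 IK] I_st S1_def by blast
  have OTC_ge: "0 \<le> Inf (f1 ` S1)" using S1ne f1nn by (intro cInf_greatest) auto
  have OTM_ge: "0 \<le> Inf (f2 ` S2)" using S2ne f2nn by (intro cInf_greatest) auto
  have le: "Inf (f2 ` S2) \<le> Inf (f1 ` S1)"
  proof (rule cINF_mono[OF S1ne bdd2])
    fix m assume "m \<in> S1"
    then obtain pi0 K where m: "m = (pi0, K)" "(pi0, K) \<in> S1" by (cases m) auto
    then show "\<exists>n\<in>S2. f2 n \<le> f1 m" using trans[OF m(2)] by force
  qed
  show ?thesis
  proof
    assume "d_OTC mX nuX mY nuY C = 0"
    then show "d_OTM p mX nuX mY nuY C = 0" using OTC OTM le OTM_ge by linarith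
  next
    assume h: "d_OTM p mX nuX mY nuY C = 0"
    have small: "\<exists>pi0 K. markovian_coupling mX nuX mY nuY pi0 K \<and>
       measure_pmf.expectation (bind_pmf p (\<lambda>t. chain_law pi0 K t)) (\<lambda>(x, y). C x y)
         < Min (pmf p ` {..n}) / real (Suc n)" for n
    proof -
      have "0 < Min (pmf p ` {..n})" using ppos by (subst Min_gr_iff) auto
      then have "Inf (f2 ` S2) < Min (pmf p ` {..n}) / real (Suc n)" using h OTM by simp
      then obtain v where "v \<in> f2 ` S2" "v < Min (pmf p ` {..n}) / real (Suc n)"
        using cInf_lessD[of "f2 ` S2"] S2ne by blast
      then show ?thesis unfolding S2_def f2_def Cc_def by auto
    qed
    obtain pi0 K where pk: "stationary_markovian_coupling mX nuX mY nuY pi0 K"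
      "measure_pmf.expectation pi0 (\<lambda>(x, y). C x y) = 0"
      using key[OF sX sY Cnn ppos small] by blast
    have "(pi0, K) \<in> S1" "f1 (pi0, K) = 0" using pk by (auto simp: S1_def f1_def Cc_def)
    then have "Inf (f1 ` S1) \<le> 0" using bdd1 by (metis cInf_lower image_eqI)
    then show "d_OTC mX nuX mY nuY C = 0" using OTC OTC_ge by linarith
  qed
qed

end
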